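(* Let $t\ge 0$ and $s\ge 1$ be integers, and let $G$ be a finite incomparability graph such that no $t$-minor of $G$ is isomorphic to the star $K_{1,s}$ (a center adjacent to $s$ pairwise non-adjacent leaves). Then $\hat\beta_t(G)\le s$.
   Context: All graphs are finite and simple. An incomparability graph is a graph whose complement admits a transitive orientation. For an integer $t\ge 0$, a graph $H$ is a $t$-shallow minor ($t$-minor) of a graph $G$ if there are pairwise disjoint sets $V_v\subseteq V(G)$, $v\in V(H)$, each inducing a connected subgraph of $G$ of radius at most $t$, such that $uv\in E(H)$ if and only if some edge of $G$ joins $V_u$ and $V_v$ (i.e. $H$ is obtained by contracting connected subgraphs of radius at most $t$ and deleting vertices, but not edges). For a graph $H$, $\beta(H)$ is the minimum number of cliques partitioning $V(H)$; for $x\in V(H)$, $H_x$ is the subgraph induced by the closed neighborhood $N_H[x]$; $\tilde\beta(H)=\min_{x\in V(H)}\beta(H_x)$; and $\hat\beta_t(G)=\max\{\tilde\beta(H): H \text{ a nonempty } t\text{-minor of } G\}$. *)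

theory Defs
  imports Main "HOL-Library.Disjoint_Sets"
begin

definition graph :: "'a set \<Rightarrow> ('a \<Rightarrow> 'a \<Rightarrow> bool) \<Rightarrow> bool" where
  "graph V E \<longleftrightarrow> finite V \<and> (\<forall>u v. E u v \<longrightarrow> u \<in> V \<and> v \<in> V \<and> u \<noteq> v)
     \<and> (\<forall>u v. E u v \<longrightarrow> E v u)"

definition incomparability_graph :: "'a set \<Rightarrow> ('a \<Rightarrow> 'a \<Rightarrow> bool) \<Rightarrow> bool" where
  "incomparability_graph V E \<longleftrightarrow> (\<exists>P :: 'a \<Rightarrow> 'a \<Rightarrow> bool.
      (\<forall>u v. P u v \<longrightarrow> u \<in> V \<and> v \<in> V \<and> u \<noteq> v \<and> \<not> E u v)
    \<and> (\<forall>u\<in>V. \<forall>v\<in>V. u \<noteq> v \<and> \<not> E u v \<longrightarrow> P u v \<or> P v u)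
    \<and> (\<forall>u v. P u v \<longrightarrow> \<not> P v u)
    \<and> (\<forall>u v w. P u v \<and> P v w \<longrightarrow> P u w))"

fun within_dist :: "('a \<Rightarrow> 'a \<Rightarrow> bool) \<Rightarrow> 'a set \<Rightarrow> nat \<Rightarrow> 'a \<Rightarrow> 'a \<Rightarrow> bool" where
  "within_dist E S 0 c x \<longleftrightarrow> c = x \<and> c \<in> S"
| "within_dist E S (Suc k) c x \<longleftrightarrow> within_dist E S k c x
     \<or> (\<exists>y. within_dist E S k c y \<and> E y x \<and> x \<in> S)"

definition radius_le :: "('a \<Rightarrow> 'a \<Rightarrow> bool) \<Rightarrow> 'a set \<Rightarrow> nat \<Rightarrow> bool" where
  "radius_le E S t \<longleftrightarrow> (\<exists>c\<in>S. \<forall>x\<in>S. within_dist E S t c x)"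

definition shallow_minor :: "nat \<Rightarrow> 'b set \<Rightarrow> ('b \<Rightarrow> 'b \<Rightarrow> bool) \<Rightarrow> 'a set \<Rightarrow> ('a \<Rightarrow> 'a \<Rightarrow> bool) \<Rightarrow> bool" where
  "shallow_minor t VH EH V E \<longleftrightarrow> graph VH EH \<and> (\<exists>B :: 'b \<Rightarrow> 'a set.
      (\<forall>v\<in>VH. B v \<subseteq> V \<and> radius_le E (B v) t)
    \<and> (\<forall>u\<in>VH. \<forall>v\<in>VH. u \<noteq> v \<longrightarrow> B u \<inter> B v = {})
    \<and> (\<forall>u\<in>VH. \<forall>v\<in>VH. u \<noteq> v \<longrightarrow> (EH u v \<longleftrightarrow> (\<exists>x\<in>B u. \<exists>y\<in>B v. E x y))))"

definition star_V :: "nat \<Rightarrow> nat set" where "star_V s = {0..s}"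
definition star_E :: "nat \<Rightarrow> nat \<Rightarrow> nat \<Rightarrow> bool" where
  "star_E s u v \<longleftrightarrow> u \<le> s \<and> v \<le> s \<and> ((u = 0 \<and> v \<noteq> 0) \<or> (v = 0 \<and> u \<noteq> 0))"

definition isomorphic :: "'a set \<Rightarrow> ('a \<Rightarrow> 'a \<Rightarrow> bool) \<Rightarrow> 'b set \<Rightarrow> ('b \<Rightarrow> 'b \<Rightarrow> bool) \<Rightarrow> bool" where
  "isomorphic V E W F \<longleftrightarrow> (\<exists>f. bij_betw f V W \<and> (\<forall>u\<in>V. \<forall>v\<in>V. E u v \<longleftrightarrow> F (f u) (f v)))"

definition is_clique :: "('a \<Rightarrow> 'a \<Rightarrow> bool) \<Rightarrow> 'a set \<Rightarrow> bool" where
  "is_clique E C \<longleftrightarrow> (\<forall>u\<in>C. \<forall>v\<in>C. u \<noteq> v \<longrightarrow> E u v)"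

definition beta :: "'a set \<Rightarrow> ('a \<Rightarrow> 'a \<Rightarrow> bool) \<Rightarrow> nat" where
  "beta V E = (LEAST k. \<exists>P. partition_on V P \<and> (\<forall>C\<in>P. is_clique E C) \<and> card P = k)"

definition closed_nbhd :: "'a set \<Rightarrow> ('a \<Rightarrow> 'a \<Rightarrow> bool) \<Rightarrow> 'a \<Rightarrow> 'a set" where
  "closed_nbhd V E x = insert x {y\<in>V. E x y}"

definition beta_tilde :: "'a set \<Rightarrow> ('a \<Rightarrow> 'a \<Rightarrow> bool) \<Rightarrow> nat" where
  "beta_tilde V E = Min ((\<lambda>x. beta (closed_nbhd V E x) (\<lambda>u v. u \<in> closed_nbhd V E x \<and> v \<in> closed_nbhd V E x \<and> E u v)) ` V)"

text \<open>hat beta_t(G): maximum of beta_tilde over nonempty t-minors (vertices labelled by nat,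
  which loses nothing since minors are finite).\<close>
definition beta_hat :: "nat \<Rightarrow> 'a set \<Rightarrow> ('a \<Rightarrow> 'a \<Rightarrow> bool) \<Rightarrow> nat" where
  "beta_hat t V E = Sup {beta_tilde VH EH | (VH :: nat set) EH. VH \<noteq> {} \<and> shallow_minor t VH EH V E}"

end

theory Submission
  imports Defs
begin

lemma has_minimal:
  assumes "finite D" "D \<noteq> {}" "\<forall>u v. Q u v \<longrightarrow> \<not> Q v u"
    "\<forall>u v w. Q u v \<and> Q v w \<longrightarrow> Q u w"
  shows "\<exists>m\<in>D. \<forall>y\<in>D. \<not> Q y m"
  using assms(1,2)
proof (induction D rule: finite_ne_induct)
  case (singleton x)
  then show ?case using assms(3) by blast
next
  case (insert x F)
  then obtain m where m: "m \<in> F" "\<forall>y\<in>F. \<not> Q y m" by blast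
  show ?case
  proof (cases "Q x m")
    case True
    then show ?thesis using m assms(3,4) by blast
  next
    case False
    then show ?thesis using m by blast
  qed
qed

lemma mirsky:
  assumes "finite S" "\<forall>u v. Q u v \<longrightarrow> \<not> Q v u"
    "\<forall>u v w. Q u v \<and> Q v w \<longrightarrow> Q u w"
    "\<forall>C\<subseteq>S. (\<forall>u\<in>C. \<forall>v\<in>C. u \<noteq> v \<longrightarrow> Q u v \<or> Q v u) \<longrightarrow> card C \<le> k"
  shows "\<exists>Pt. partition_on S Pt \<and> (\<forall>A\<in>Pt. \<forall>u\<in>A. \<forall>v\<in>A. \<not> Q u v) \<and> card Pt \<le> k"
  using assms(1,4)
proof (induction k arbitrary: S)
  case 0
  have "S = {}"
  proof (rule ccontr)
    assume "S \<noteq> {}"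
    then obtain x where "x \<in> S" by blast
    with "0.prems"(2) have "card {x} \<le> 0" by auto
    then show False by simp
  qed
  then show ?case by (intro exI[of _ "{}"]) (auto simp: partition_on_empty)
next
  case (Suc k)
  show ?case
  proof (cases "S = {}")
    case True
    then show ?thesis by (intro exI[of _ "{}"]) (auto simp: partition_on_empty)
  next
    case False
    define M where "M = {m\<in>S. \<forall>y\<in>S. \<not> Q y m}"
    have Mne: "M \<noteq> {}" using has_minimal[OF Suc.prems(1) False assms(2,3)] M_def by blast
    have "\<forall>C\<subseteq>S - M. (\<forall>u\<in>C. \<forall>v\<in>C. u \<noteq> v \<longrightarrow> Q u v \<or> Q v u) \<longrightarrow> card C \<le> k"
    proof (intro allI impI)
      fix C assume CS: "C \<subseteq> S - M" and ch: "\<forall>u\<in>C. \<forall>v\<in>C. u \<noteq> v \<longrightarrow> Q u v \<or> Q v u"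
      show "card C \<le> k"
      proof (cases "C = {}")
        case True then show ?thesis by simp
      next
        case False
        have fC: "finite C" using CS Suc.prems(1) finite_subset by blast
        obtain c where c: "c \<in> C" "\<forall>y\<in>C. \<not> Q y c" using has_minimal[OF fC False assms(2,3)] by blast
        have "c \<notin> M" using c CS by blast
        hence Dne: "{y\<in>S. Q y c} \<noteq> {}" using c CS M_def by blast
        obtain m where m: "m \<in> {y\<in>S. Q y c}" "\<forall>y\<in>{y\<in>S. Q y c}. \<not> Q y m"
          using has_minimal[OF _ Dne assms(2,3)] Suc.prems(1) by auto
        have mM: "m \<in> M" unfolding M_def using m assms(3) by blast
        hence mC: "m \<notin> C" using CS by blast
        have "\<forall>z\<in>C. Q m z"
        proof
          fix z assume "z \<in> C"
          show "Q m z"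
          proof (cases "z = c")
            case True then show ?thesis using m by simp
          next
            case False
            then have "Q c z" using ch c \<open>z \<in> C\<close> by blast
            then show ?thesis using m assms(3) by blast
          qed
        qed
        then have "\<forall>u\<in>insert m C. \<forall>v\<in>insert m C. u \<noteq> v \<longrightarrow> Q u v \<or> Q v u"
          using ch by blast
        moreover have "insert m C \<subseteq> S" using CS mM M_def by blast
        ultimately have "card (insert m C) \<le> Suc k" using Suc.prems(2) by blast
        then show ?thesis using mC fC by simp
      qed
    qed
    then obtain Pt where Pt: "partition_on (S - M) Pt" "\<forall>A\<in>Pt. \<forall>u\<in>A. \<forall>v\<in>A. \<not> Q u v"
      "card Pt \<le> k"
      using Suc.IH[of "S - M"] Suc.prems(1) by blast
    have disj: "disjnt M (\<Union>Pt)" using Pt(1) unfolding partition_on_def disjnt_def by blast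
    have MS: "M \<subseteq> S" using M_def by blast
    have "partition_on S (insert M Pt)"
      unfolding partition_on_insert[OF disj] using Pt(1) Mne MS by blast
    moreover have "\<forall>A\<in>insert M Pt. \<forall>u\<in>A. \<forall>v\<in>A. \<not> Q u v" using Pt(2) M_def by auto
    moreover have "card (insert M Pt) \<le> Suc k"
    proof (cases "finite Pt")
      case True then show ?thesis using Pt(3) by (simp add: card_insert_if)
    next
      case False then show ?thesis by simp
    qed
    ultimately show ?thesis by blast
  qed
qed

lemma wd_side:
  assumes "within_dist E S k c x" "R c b" "\<forall>a\<in>S. R a b \<or> R b a"
    "\<forall>u v. R u v \<longrightarrow> \<not> E u v" "\<forall>u v w. R u v \<and> R v w \<longrightarrow> R u w"
  shows "R x b"
  using assms(1)
proof (induction k arbitrary: x)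
  case 0 then show ?case using assms(2) by simp
next
  case (Suc k)
  show ?case
  proof (cases "within_dist E S k c x")
    case True then show ?thesis using Suc.IH by blast
  next
    case False
    then obtain y where y: "within_dist E S k c y" "E y x" "x \<in> S" using Suc.prems by auto
    have "R y b" using Suc.IH y(1) by blast
    show ?thesis
    proof (rule ccontr)
      assume "\<not> R x b"
      then have "R b x" using assms(3) y(3) by blast
      then have "R y x" using \<open>R y b\<close> assms(5) by blast
      then show False using y(2) assms(4) by blast
    qed
  qed
qed

lemma sets_ordered:
  assumes "\<forall>x\<in>A. within_dist E A t ca x" "\<forall>x\<in>Bs. within_dist E Bs t' cb x"
   "\<forall>a\<in>A. \<forall>b\<in>Bs. R a b \<or> R b a" "\<forall>u v. R u v \<longrightarrow> \<not> E u v" "\<forall>u v. E u v \<longrightarrow> E v u"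
   "\<forall>u v w. R u v \<and> R v w \<longrightarrow> R u w" "R ca cb" "cb \<in> Bs"
  shows "\<forall>a\<in>A. \<forall>b\<in>Bs. R a b"
proof (intro ballI)
  fix a b assume a: "a \<in> A" and b: "b \<in> Bs"
  have "R a cb"
    using wd_side[of E A t ca a R cb] assms a by blast
  moreover have "\<forall>a'\<in>Bs. (\<lambda>x y. R y x) a' a \<or> (\<lambda>x y. R y x) a a'" using assms(3) a by blast
  moreover have "\<forall>u v. (\<lambda>x y. R y x) u v \<longrightarrow> \<not> E u v" using assms(4,5) by blast
  moreover have "\<forall>u v w. (\<lambda>x y. R y x) u v \<and> (\<lambda>x y. R y x) v w \<longrightarrow> (\<lambda>x y. R y x) u w"
    using assms(6) by blast
  ultimately have "(\<lambda>x y. R y x) b a"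
    using wd_side[of E Bs t' cb b "\<lambda>x y. R y x" a] assms(2) b by blast
  then show "R a b" by simp
qed

theorem theorem2p1:
  fixes t s :: nat and V :: "'a set" and E :: "'a \<Rightarrow> 'a \<Rightarrow> bool"
  assumes "s \<ge> 1"
    and "graph V E"
    and "incomparability_graph V E"
    and "\<forall>(VH :: nat set) EH. shallow_minor t VH EH V E \<longrightarrow> \<not> isomorphic VH EH (star_V s) (star_E s)"
  shows "beta_hat t V E \<le> s"
proof -
  obtain P where P1: "\<forall>u v. P u v \<longrightarrow> u \<in> V \<and> v \<in> V \<and> u \<noteq> v \<and> \<not> E u v"
    and P2: "\<forall>u\<in>V. \<forall>v\<in>V. u \<noteq> v \<and> \<not> E u v \<longrightarrow> P u v \<or> P v u"
    and P3: "\<forall>u v. P u v \<longrightarrow> \<not> P v u"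
    and P4: "\<forall>u v w. P u v \<and> P v w \<longrightarrow> P u w"
    using assms(3) unfolding incomparability_graph_def by blast
  have Esym: "\<forall>u v. E u v \<longrightarrow> E v u" using assms(2) unfolding graph_def by blast
  have PnE: "\<forall>u v. P u v \<longrightarrow> \<not> E u v" using P1 by blast
  have key: "beta_tilde VH EH \<le> s" if VHne: "VH \<noteq> {}" and sm: "shallow_minor t VH EH V E"
    for VH :: "nat set" and EH
  proof -
    have gH: "graph VH EH" using sm unfolding shallow_minor_def by blast
    obtain B where B1: "\<forall>v\<in>VH. B v \<subseteq> V \<and> radius_le E (B v) t"
      and B2: "\<forall>u\<in>VH. \<forall>v\<in>VH. u \<noteq> v \<longrightarrow> B u \<inter> B v = {}"
      and B3: "\<forall>u\<in>VH. \<forall>v\<in>VH. u \<noteq> v \<longrightarrow> (EH u v \<longleftrightarrow> (\<exists>x\<in>B u. \<exists>y\<in>B v. E x y))"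
      using sm unfolding shallow_minor_def by blast
    have finVH: "finite VH" using gH unfolding graph_def by blast
    have EHirr: "\<And>u v. EH u v \<Longrightarrow> u \<in> VH \<and> v \<in> VH \<and> u \<noteq> v" using gH unfolding graph_def by blast
    have EHsym: "\<And>u v. EH u v \<Longrightarrow> EH v u" using gH unfolding graph_def by blast
    have Bne: "\<And>v. v \<in> VH \<Longrightarrow> B v \<noteq> {}" using B1 unfolding radius_le_def by blast
    have comp: "(\<forall>a\<in>B u. \<forall>b\<in>B v. P a b) \<or> (\<forall>a\<in>B u. \<forall>b\<in>B v. P b a)"
      if uv: "u \<in> VH" "v \<in> VH" "u \<noteq> v" "\<not> EH u v" for u v
    proof -
      have cmp: "\<forall>a\<in>B u. \<forall>b\<in>B v. P a b \<or> P b a"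
      proof (intro ballI)
        fix a b assume a: "a \<in> B u" and b: "b \<in> B v"
        have "a \<noteq> b" using B2 uv a b by blast
        moreover have "\<not> E a b" using B3 uv a b by blast
        moreover have "a \<in> V" "b \<in> V" using B1 uv a b by blast+
        ultimately show "P a b \<or> P b a" using P2 by blast
      qed
      obtain cu where cu: "cu \<in> B u" "\<forall>x\<in>B u. within_dist E (B u) t cu x"
        using B1 uv unfolding radius_le_def by blast
      obtain cv where cv: "cv \<in> B v" "\<forall>x\<in>B v. within_dist E (B v) t cv x"
        using B1 uv unfolding radius_le_def by blast
      have "P cu cv \<or> P cv cu" using cmp cu cv by blast
      then show ?thesis
      proof
        assume "P cu cv"
        then have "\<forall>a\<in>B u. \<forall>b\<in>B v. P a b"
          using sets_ordered[of "B u" E t cu "B v" t cv P] cu cv cmp PnE Esym P4 by blast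
        then show ?thesis by blast
      next
        assume "P cv cu"
        moreover have "\<forall>a\<in>B v. \<forall>b\<in>B u. P a b \<or> P b a" using cmp by blast
        ultimately have "\<forall>a\<in>B v. \<forall>b\<in>B u. P a b"
          using sets_ordered[of "B v" E t cv "B u" t cu P] cu cv PnE Esym P4 by blast
        then show ?thesis by blast
      qed
    qed
    define Q where "Q u v \<longleftrightarrow> u \<in> VH \<and> v \<in> VH \<and> u \<noteq> v \<and> (\<forall>a\<in>B u. \<forall>b\<in>B v. P a b)" for u v
    have Qasym: "\<forall>u v. Q u v \<longrightarrow> \<not> Q v u"
    proof (intro allI impI notI)
      fix u v assume q1: "Q u v" and q2: "Q v u"
      have uV: "u \<in> VH" and vV: "v \<in> VH" using q1 unfolding Q_def by auto
      obtain a where a: "a \<in> B u" using Bne[OF uV] by blast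
      obtain b where b: "b \<in> B v" using Bne[OF vV] by blast
      have "P a b" using q1 a b unfolding Q_def by auto
      moreover have "P b a" using q2 a b unfolding Q_def by auto
      ultimately show False using P3 by auto
    qed
    have Qtrans: "\<forall>u v w. Q u v \<and> Q v w \<longrightarrow> Q u w"
    proof (intro allI impI)
      fix u v w assume h: "Q u v \<and> Q v w"
      then have q1: "Q u v" and q2: "Q v w" by auto
      have "u \<noteq> w"
      proof
        assume "u = w" then show False using q1 q2 Qasym by auto
      qed
      moreover have vV: "v \<in> VH" using q1 unfolding Q_def by auto
      then obtain b where b: "b \<in> B v" using Bne by blast
      have "\<forall>a\<in>B u. \<forall>c\<in>B w. P a c"
      proof (intro ballI)
        fix a c assume a: "a \<in> B u" and c: "c \<in> B w"
        have "P a b" using q1 a b unfolding Q_def by auto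
        moreover have "P b c" using q2 b c unfolding Q_def by auto
        ultimately show "P a c" using P4 by blast
      qed
      ultimately show "Q u w" using q1 q2 unfolding Q_def by auto
    qed
    have Qcomp: "Q u v \<or> Q v u" if "u \<in> VH" "v \<in> VH" "u \<noteq> v" "\<not> EH u v" for u v
      using comp[OF that] that unfolding Q_def by auto
    have QnE: "\<not> EH u v" if q: "Q u v" for u v
    proof
      assume e: "EH u v"
      have uV: "u \<in> VH" and vV: "v \<in> VH" and uv: "u \<noteq> v" using q unfolding Q_def by auto
      obtain a b where ab: "a \<in> B u" "b \<in> B v" "E a b" using B3 uV vV uv e by blast
      have "P a b" using q ab unfolding Q_def by auto
      then show False using ab PnE by blast
    qed
    obtain x where xV: "x \<in> VH" using VHne by blast
    define N where "N = {y\<in>VH. EH x y}"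
    have xN: "x \<notin> N" using EHirr unfolding N_def by blast
    have finN: "finite N" using finVH unfolding N_def by simp
    have chain: "\<forall>C\<subseteq>N. (\<forall>u\<in>C. \<forall>v\<in>C. u \<noteq> v \<longrightarrow> Q u v \<or> Q v u) \<longrightarrow> card C \<le> s - 1"
    proof (intro allI impI; rule ccontr)
      fix C assume CN: "C \<subseteq> N" and ch: "\<forall>u\<in>C. \<forall>v\<in>C. u \<noteq> v \<longrightarrow> Q u v \<or> Q v u"
        and big: "\<not> card C \<le> s - 1"
      have "s \<le> card C" using big assms(1) by linarith
      then obtain C' where C': "C' \<subseteq> C" "card C' = s" "finite C'" by (rule obtain_subset_with_card_n)
      have finC': "finite C'" using C'(3) .
      have C'N: "C' \<subseteq> N" using C' CN by blast
      have nadj: "\<And>u v. u \<in> C' \<Longrightarrow> v \<in> C' \<Longrightarrow> \<not> EH u v"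
      proof -
        fix u v assume "u \<in> C'" "v \<in> C'"
        show "\<not> EH u v"
        proof (cases "u = v")
          case True then show ?thesis using EHirr by blast
        next
          case False
          then have "Q u v \<or> Q v u" using ch C'(1) \<open>u \<in> C'\<close> \<open>v \<in> C'\<close> by blast
          then show ?thesis
          proof
            assume "Q u v" then show ?thesis using QnE by blast
          next
            assume "Q v u" then have "\<not> EH v u" using QnE by blast
            then show ?thesis using EHsym by blast
          qed
        qed
      qed
      define VH' where "VH' = insert x C'"
      define EH' where "EH' u v \<longleftrightarrow> u \<in> VH' \<and> v \<in> VH' \<and> EH u v" for u v
      have VH'sub: "VH' \<subseteq> VH" using C'N xV unfolding VH'_def N_def by blast
      have finVH': "finite VH'" using finC' unfolding VH'_def by simp
      have irr': "\<forall>u v. EH' u v \<longrightarrow> u \<in> VH' \<and> v \<in> VH' \<and> u \<noteq> v"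
      proof (intro allI impI)
        fix u v assume "EH' u v"
        then have "u \<in> VH'" "v \<in> VH'" "EH u v" unfolding EH'_def by blast+
        then show "u \<in> VH' \<and> v \<in> VH' \<and> u \<noteq> v" using EHirr[of u v] by blast
      qed
      have sym': "\<forall>u v. EH' u v \<longrightarrow> EH' v u"
      proof (intro allI impI)
        fix u v assume "EH' u v"
        then have "u \<in> VH'" "v \<in> VH'" "EH u v" unfolding EH'_def by blast+
        then show "EH' v u" using EHsym[of u v] unfolding EH'_def by blast
      qed
      have "graph VH' EH'" unfolding graph_def using finVH' irr' sym' by blast
      moreover have "\<forall>v\<in>VH'. B v \<subseteq> V \<and> radius_le E (B v) t" using B1 VH'sub by blast
      moreover have "\<forall>u\<in>VH'. \<forall>v\<in>VH'. u \<noteq> v \<longrightarrow> B u \<inter> B v = {}" using B2 VH'sub by blast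
      moreover have "\<forall>u\<in>VH'. \<forall>v\<in>VH'. u \<noteq> v \<longrightarrow> (EH' u v \<longleftrightarrow> (\<exists>x\<in>B u. \<exists>y\<in>B v. E x y))"
        using B3 VH'sub unfolding EH'_def by blast
      ultimately have smin: "shallow_minor t VH' EH' V E" unfolding shallow_minor_def by blast
      have "card {1..s} = s" by simp
      then obtain g where g: "bij_betw g C' {1..s}"
        using finite_same_card_bij[of C' "{1..s}"] finC' C'(2) by auto
      define f where "f y = (if y = x then 0 else g y)" for y
      have xC': "x \<notin> C'" using xN C'N by blast
      have gC: "\<And>y. y \<in> C' \<Longrightarrow> g y \<in> {1..s}" using g bij_betwE by blast
      have ginj: "inj_on g C'" using g unfolding bij_betw_def by blast
      have fx: "f x = 0" unfolding f_def by simp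
      have fC: "\<And>y. y \<in> C' \<Longrightarrow> f y = g y" unfolding f_def using xC' by auto
      have fpos: "\<And>y. y \<in> C' \<Longrightarrow> f y \<ge> 1 \<and> f y \<le> s" using fC gC by auto
      have "inj_on f VH'"
      proof (rule inj_onI)
        fix u v assume u: "u \<in> VH'" and v: "v \<in> VH'" and e: "f u = f v"
        show "u = v"
        proof (cases "u = x")
          case True
          then show ?thesis
          proof (cases "v = x")
            case False then have "v \<in> C'" using v unfolding VH'_def by blast
            then show ?thesis using fpos[of v] e fx True by simp
          qed simp
        next
          case False
          then have uC: "u \<in> C'" using u unfolding VH'_def by blast
          show ?thesis
          proof (cases "v = x")
            case True then show ?thesis using fpos[of u] e fx uC by simp
          next
            case False then have "v \<in> C'" using v unfolding VH'_def by blast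
            then show ?thesis using uC e fC ginj inj_onD by metis
          qed
        qed
      qed
      moreover have "f ` VH' = {0..s}"
      proof -
        have "f ` VH' = insert (f x) (f ` C')" unfolding VH'_def by simp
        also have "f ` C' = g ` C'" using fC by (rule image_cong[OF refl])
        also have "g ` C' = {1..s}" using g unfolding bij_betw_def by blast
        also have "insert (f x) {1..s} = {0..s}" using fx by auto
        finally show ?thesis .
      qed
      ultimately have bij: "bij_betw f VH' (star_V s)" unfolding bij_betw_def star_V_def by blast
      have "\<forall>u\<in>VH'. \<forall>v\<in>VH'. EH' u v \<longleftrightarrow> star_E s (f u) (f v)"
      proof (intro ballI)
        fix u v assume u: "u \<in> VH'" and v: "v \<in> VH'"
        show "EH' u v \<longleftrightarrow> star_E s (f u) (f v)"
        proof (cases "u = x")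
          case True
          show ?thesis
          proof (cases "v = x")
            case True
            have "\<not> EH' u v" using irr' \<open>u = x\<close> True by blast
            moreover have "\<not> star_E s (f u) (f v)" using \<open>u = x\<close> True fx unfolding star_E_def by simp
            ultimately show ?thesis by blast
          next
            case False
            then have vC: "v \<in> C'" using v unfolding VH'_def by blast
            then have "EH x v" using C'N unfolding N_def by blast
            then have "EH' u v" using u v \<open>u = x\<close> unfolding EH'_def by blast
            moreover have "star_E s (f u) (f v)" using \<open>u = x\<close> fx fpos[OF vC] unfolding star_E_def by simp
            ultimately show ?thesis by blast
          qed
        next
          case False
          then have uC: "u \<in> C'" using u unfolding VH'_def by blast
          show ?thesis
          proof (cases "v = x")
            case True
            have "EH x u" using uC C'N unfolding N_def by blast
            then have "EH u x" using EHsym by blast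
            then have "EH' u v" using u v True unfolding EH'_def by blast
            moreover have "star_E s (f u) (f v)" using True fx fpos[OF uC] unfolding star_E_def by simp
            ultimately show ?thesis by blast
          next
            case False
            then have vC: "v \<in> C'" using v unfolding VH'_def by blast
            have "\<not> EH' u v" using nadj[OF uC vC] unfolding EH'_def by blast
            moreover have "\<not> star_E s (f u) (f v)" using fpos[OF uC] fpos[OF vC] unfolding star_E_def by simp
            ultimately show ?thesis by blast
          qed
        qed
      qed
      then have "isomorphic VH' EH' (star_V s) (star_E s)"
        unfolding isomorphic_def using bij by blast
      then show False using assms(4) smin by blast
    qed
    obtain Pt where Pt: "partition_on N Pt" "\<forall>A\<in>Pt. \<forall>u\<in>A. \<forall>v\<in>A. \<not> Q u v" "card Pt \<le> s - 1"
      using mirsky[OF finN Qasym Qtrans chain] by blast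
    define X where "X = closed_nbhd VH EH x"
    have XN: "X = insert x N" unfolding X_def closed_nbhd_def N_def by simp
    have disj: "disjnt {x} (\<Union>Pt)" using Pt(1) xN unfolding partition_on_def disjnt_def by blast
    have part: "partition_on X (insert {x} Pt)"
      unfolding partition_on_insert[OF disj] XN using Pt(1) xN by simp
    have cliques: "\<forall>C\<in>insert {x} Pt. is_clique (\<lambda>u v. u \<in> X \<and> v \<in> X \<and> EH u v) C"
    proof
      fix C assume C: "C \<in> insert {x} Pt"
      show "is_clique (\<lambda>u v. u \<in> X \<and> v \<in> X \<and> EH u v) C"
      proof (cases "C = {x}")
        case True then show ?thesis unfolding is_clique_def by blast
      next
        case False
        then have CP: "C \<in> Pt" using C by blast
        then have CN: "C \<subseteq> N" using Pt(1) unfolding partition_on_def by blast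
        show ?thesis unfolding is_clique_def
        proof (intro ballI impI)
          fix u v assume u: "u \<in> C" and v: "v \<in> C" and uv: "u \<noteq> v"
          have "\<not> Q u v" "\<not> Q v u" using Pt(2) CP u v by blast+
          moreover have "u \<in> VH" "v \<in> VH" using CN u v unfolding N_def by blast+
          ultimately have "EH u v" using Qcomp uv by blast
          then show "u \<in> X \<and> v \<in> X \<and> EH u v" using CN u v XN by blast
        qed
      qed
    qed
    have cardle: "card (insert {x} Pt) \<le> s"
    proof (cases "finite Pt")
      case True then show ?thesis using Pt(3) assms(1) by (auto simp add: card_insert_if)
    next
      case False then show ?thesis using assms(1) by simp
    qed
    have "beta X (\<lambda>u v. u \<in> X \<and> v \<in> X \<and> EH u v) \<le> card (insert {x} Pt)"
      unfolding beta_def by (rule Least_le) (use part cliques in blast)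
    then have bx: "beta X (\<lambda>u v. u \<in> X \<and> v \<in> X \<and> EH u v) \<le> s" using cardle by linarith
    have "beta_tilde VH EH \<le> beta X (\<lambda>u v. u \<in> X \<and> v \<in> X \<and> EH u v)"
      unfolding beta_tilde_def X_def using finVH xV by (intro Min_le) auto
    then show ?thesis using bx by linarith
  qed
  show ?thesis
  proof (cases "{beta_tilde VH EH | (VH :: nat set) EH. VH \<noteq> {} \<and> shallow_minor t VH EH V E} = {}")
    case True then show ?thesis unfolding beta_hat_def by (simp only: True) simp
  next
    case False then show ?thesis unfolding beta_hat_def
      by (rule cSup_least) (use key in blast)
  qed
qed

end
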